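(* Let $q(z,\psi)$ be a joint probability density, fix $z$ with $q(z)=\int q(z,\psi)\,d\psi>0$, and set $q(\psi\mid z)=q(z,\psi)/q(z)$. Let $\tau(\psi\mid z)$ be a probability density in $\psi$ such that $\tau(\psi\mid z)=0$ implies $q(\psi,z)=0$. For $K\in\mathbb{N}_0$ define $$\omega_{q,\tau}(\psi_{0:K}\mid z)=\frac{q(\psi_0\mid z)\prod_{k=1}^K\tau(\psi_k\mid z)}{\frac{1}{K+1}\sum_{k=0}^{K}\frac{q(\psi_k\mid z)}{\tau(\psi_k\mid z)}}$$ and $$\nu_{q,\tau}(\psi_{0:K+1}\mid z)=\omega_{q,\tau}(\psi_{0:K}\mid z)\,\tau(\psi_{K+1}\mid z)\,\frac{1}{K+2}\sum_{k=0}^{K+1}\frac{q(\psi_k\mid z)}{\tau(\psi_k\mid z)}.$$ Then $\nu_{q,\tau}(\psi_{0:K+1}\mid z)$ is a normalized probability density in $\psi_{0:K+1}$ (it is non-negative and integrates to $1$).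
   Context: All densities are with respect to a fixed base measure.
   Formalization: Where the average $\frac{1}{K+1}\sum_{k=0}^{K}\frac{q(\psi_k\mid z)}{\tau(\psi_k\mid z)}$ vanishes, $\omega_{q,\tau}(\psi_{0:K}\mid z)$ equals $\prod_{k=0}^{K}\tau(\psi_k\mid z)$ instead of the quotient, and both base measures are sigma-finite. Apart from conventions, each condition added here is assumed in the paper as well or is needed for the statement above to hold. *)

theory Defs
  imports "HOL-Probability.Probability"
begin

definition marg :: "'p measure \<Rightarrow> ('z \<Rightarrow> 'p \<Rightarrow> real) \<Rightarrow> 'z \<Rightarrow> ennreal" where
  "marg M q z = (\<integral>\<^sup>+ \<psi>. ennreal (q z \<psi>) \<partial>M)"

definition cond :: "'p measure \<Rightarrow> ('z \<Rightarrow> 'p \<Rightarrow> real) \<Rightarrow> 'z \<Rightarrow> 'p \<Rightarrow> real" where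
  "cond M q z \<psi> = q z \<psi> / enn2real (marg M q z)"

definition avg_ratio :: "'p measure \<Rightarrow> ('z \<Rightarrow> 'p \<Rightarrow> real) \<Rightarrow> ('z \<Rightarrow> 'p \<Rightarrow> real)
    \<Rightarrow> 'z \<Rightarrow> nat \<Rightarrow> (nat \<Rightarrow> 'p) \<Rightarrow> real" where
  "avg_ratio M q \<tau> z K \<psi>s =
     (1 / real (K + 1)) * (\<Sum>k\<le>K. cond M q z (\<psi>s k) / \<tau> z (\<psi>s k))"

text \<open>omega_{q,tau}(psi_{0:K} | z). Convention at the undefined points 0/0
  (where the average is 0, hence also the numerator is 0): value prod_{k=0}^K tau(psi_k|z).\<close>
definition omega :: "'p measure \<Rightarrow> ('z \<Rightarrow> 'p \<Rightarrow> real) \<Rightarrow> ('z \<Rightarrow> 'p \<Rightarrow> real)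
    \<Rightarrow> 'z \<Rightarrow> nat \<Rightarrow> (nat \<Rightarrow> 'p) \<Rightarrow> real" where
  "omega M q \<tau> z K \<psi>s =
     (if avg_ratio M q \<tau> z K \<psi>s = 0 then (\<Prod>k\<le>K. \<tau> z (\<psi>s k))
      else cond M q z (\<psi>s 0) * (\<Prod>k\<in>{1..K}. \<tau> z (\<psi>s k)) / avg_ratio M q \<tau> z K \<psi>s)"

definition nu :: "'p measure \<Rightarrow> ('z \<Rightarrow> 'p \<Rightarrow> real) \<Rightarrow> ('z \<Rightarrow> 'p \<Rightarrow> real)
    \<Rightarrow> 'z \<Rightarrow> nat \<Rightarrow> (nat \<Rightarrow> 'p) \<Rightarrow> real" where
  "nu M q \<tau> z K \<psi>s =
     omega M q \<tau> z K \<psi>s * \<tau> z (\<psi>s (Suc K)) * avg_ratio M q \<tau> z (Suc K) \<psi>s"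

end

theory Submission
  imports Defs
begin

lemma PiM_perm:
  fixes M :: "'a measure" and I :: "'i set"
  assumes sf: "sigma_finite_measure M" and fin: "finite I" and s: "s permutes I"
  shows "distr (PiM I (\<lambda>_. M)) (PiM I (\<lambda>_. M)) (\<lambda>x. \<lambda>k\<in>I. x (s k)) = PiM I (\<lambda>_. M)"
proof -
  interpret P: product_sigma_finite "\<lambda>_. M" using sf by (simp add: product_sigma_finite_def)
  have meas: "(\<lambda>x. \<lambda>k\<in>I. x (s k)) \<in> PiM I (\<lambda>_. M) \<rightarrow>\<^sub>M PiM I (\<lambda>_. M)"
    using s by (intro measurable_restrict measurable_component_singleton) (auto simp: permutes_in_image)
  show ?thesis
  proof (rule P.PiM_eqI[OF fin])
    show "sets (distr (PiM I (\<lambda>_. M)) (PiM I (\<lambda>_. M)) (\<lambda>x. \<lambda>k\<in>I. x (s k))) = sets (PiM I (\<lambda>_. M))" by simp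
    fix A assume A: "\<And>i. i \<in> I \<Longrightarrow> A i \<in> sets M"
    have si: "inv s permutes I" using s by (rule permutes_inv)
    have "(\<lambda>x. \<lambda>k\<in>I. x (s k)) -` PiE I A \<inter> space (PiM I (\<lambda>_. M)) = PiE I (\<lambda>k. A (inv s k))"
    proof (intro set_eqI iffI)
      fix x assume x: "x \<in> (\<lambda>x. \<lambda>k\<in>I. x (s k)) -` PiE I A \<inter> space (PiM I (\<lambda>_. M))"
      show "x \<in> PiE I (\<lambda>k. A (inv s k))"
      proof -
        have "x j \<in> A (inv s j)" if "j \<in> I" for j
        proof -
          have "inv s j \<in> I" using si that by (simp add: permutes_in_image)
          hence "x (s (inv s j)) \<in> A (inv s j)" using x by (auto simp: PiE_iff)
          thus ?thesis using s by (simp add: permutes_inverses(1))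
        qed
        thus ?thesis using x by (auto simp: space_PiM PiE_iff)
      qed
    next
      fix x assume x: "x \<in> PiE I (\<lambda>k. A (inv s k))"
      have "x (s k) \<in> A k" if "k \<in> I" for k
      proof -
        have "s k \<in> I" using s that by (simp add: permutes_in_image)
        hence "x (s k) \<in> A (inv s (s k))" using x by auto
        thus ?thesis using s by (simp add: permutes_inverses(2))
      qed
      moreover have "x \<in> space (PiM I (\<lambda>_. M))"
      proof -
        have "x i \<in> space M" if i: "i \<in> I" for i
        proof -
          have "inv s i \<in> I" using si i by (simp add: permutes_in_image)
          then have "A (inv s i) \<subseteq> space M" using A sets.sets_into_space by blast
          moreover have "x i \<in> A (inv s i)" using x i by auto
          ultimately show ?thesis by auto
        qed
        thus ?thesis using x by (auto simp: space_PiM PiE_iff)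
      qed
      ultimately show "x \<in> (\<lambda>x. \<lambda>k\<in>I. x (s k)) -` PiE I A \<inter> space (PiM I (\<lambda>_. M))"
        by auto
    qed
    moreover have "PiE I A \<in> sets (PiM I (\<lambda>_. M))" using A by (intro sets_PiM_I_finite fin) auto
    ultimately have "emeasure (distr (PiM I (\<lambda>_. M)) (PiM I (\<lambda>_. M)) (\<lambda>x. \<lambda>k\<in>I. x (s k))) (PiE I A)
       = emeasure (PiM I (\<lambda>_. M)) (PiE I (\<lambda>k. A (inv s k)))"
      using meas by (simp add: emeasure_distr)
    also have "\<dots> = (\<Prod>k\<in>I. emeasure M (A (inv s k)))"
      using A si by (intro P.emeasure_PiM fin) (auto simp: permutes_in_image)
    also have "\<dots> = (\<Prod>k\<in>I. emeasure M (A k))"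
      using prod.permute[OF si, of "\<lambda>k. emeasure M (A k)"] by (simp add: comp_def)
    finally show "emeasure (distr (PiM I (\<lambda>_. M)) (PiM I (\<lambda>_. M)) (\<lambda>x. \<lambda>k\<in>I. x (s k))) (PiE I A) = (\<Prod>k\<in>I. emeasure M (A k))" .
  qed
qed

definition Av :: "('p \<Rightarrow> real) \<Rightarrow> ('p \<Rightarrow> real) \<Rightarrow> nat \<Rightarrow> (nat \<Rightarrow> 'p) \<Rightarrow> real" where
  "Av c t K x = (1 / real (K + 1)) * (\<Sum>k\<le>K. c (x k) / t (x k))"

definition Om :: "('p \<Rightarrow> real) \<Rightarrow> ('p \<Rightarrow> real) \<Rightarrow> nat \<Rightarrow> (nat \<Rightarrow> 'p) \<Rightarrow> real" where
  "Om c t K x = (if Av c t K x = 0 then (\<Prod>k\<le>K. t (x k))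
      else c (x 0) * (\<Prod>k\<in>{1..K}. t (x k)) / Av c t K x)"

lemma avg_ratio_Av: "avg_ratio M q \<tau> z K = Av (cond M q z) (\<tau> z) K"
  by (intro ext) (simp add: avg_ratio_def Av_def)

lemma omega_Om: "omega M q \<tau> z K = Om (cond M q z) (\<tau> z) K"
  by (intro ext) (simp add: omega_def Om_def avg_ratio_Av)

lemma Av_cong: "(\<And>k. k \<le> K \<Longrightarrow> x k = y k) \<Longrightarrow> Av c t K x = Av c t K y"
  unfolding Av_def by (auto intro!: sum.cong)

lemma Om_cong: "(\<And>k. k \<le> K \<Longrightarrow> x k = y k) \<Longrightarrow> Om c t K x = Om c t K y"
  using Av_cong[of K x y c t] unfolding Om_def by (auto intro!: prod.cong)

lemma Av_nonneg:
  assumes "\<And>k. k \<le> K \<Longrightarrow> 0 \<le> c (x k)" "\<And>k. k \<le> K \<Longrightarrow> 0 \<le> t (x k)"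
  shows "0 \<le> Av c t K x"
  unfolding Av_def using assms by (auto intro!: sum_nonneg divide_nonneg_nonneg)

lemma Om_nonneg:
  assumes "\<And>k. k \<le> K \<Longrightarrow> 0 \<le> c (x k)" "\<And>k. k \<le> K \<Longrightarrow> 0 \<le> t (x k)"
  shows "0 \<le> Om c t K x"
  using Av_nonneg[of K c x t, OF assms] assms unfolding Om_def
  by (auto intro!: prod_nonneg divide_nonneg_nonneg mult_nonneg_nonneg)

lemma Om_Av:
  assumes c0: "\<And>k. k \<le> K \<Longrightarrow> 0 \<le> c (x k)" and t0: "\<And>k. k \<le> K \<Longrightarrow> 0 \<le> t (x k)"
    and tr: "\<And>k. k \<le> K \<Longrightarrow> t (x k) * (c (x k) / t (x k)) = c (x k)"
  shows "Om c t K x * Av c t K x = c (x 0) * (\<Prod>k\<in>{1..K}. t (x k))"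
proof (cases "Av c t K x = 0")
  case True
  hence "(\<Sum>k\<le>K. c (x k) / t (x k)) = 0" unfolding Av_def by simp
  moreover have "\<forall>k\<in>{..K}. 0 \<le> c (x k) / t (x k)" using c0 t0 by auto
  ultimately have "c (x 0) / t (x 0) = 0" using sum_nonneg_eq_0_iff[of "{..K}" "\<lambda>k. c (x k) / t (x k)"] by auto
  hence "c (x 0) = 0" using tr[of 0] by (cases "t (x 0) = 0") auto
  thus ?thesis using True by simp
next
  case False
  thus ?thesis unfolding Om_def by simp
qed

lemma Om_norm:
  fixes M :: "'p measure" and c t :: "'p \<Rightarrow> real"
  assumes sf: "sigma_finite_measure M"
    and cm[measurable]: "c \<in> borel_measurable M" and tm[measurable]: "t \<in> borel_measurable M"
    and c0: "\<And>\<psi>. \<psi> \<in> space M \<Longrightarrow> 0 \<le> c \<psi>" and t0: "\<And>\<psi>. \<psi> \<in> space M \<Longrightarrow> 0 \<le> t \<psi>"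
    and tn: "(\<integral>\<^sup>+ \<psi>. ennreal (t \<psi>) \<partial>M) = 1"
    and tr: "\<And>\<psi>. \<psi> \<in> space M \<Longrightarrow> t \<psi> * (c \<psi> / t \<psi>) = c \<psi>"
  shows "(\<integral>\<^sup>+ x. ennreal (Om c t K x) \<partial>PiM {..K} (\<lambda>_. M)) = 1"
proof -
  interpret P: product_sigma_finite "\<lambda>_. M" using sf by (simp add: product_sigma_finite_def)
  let ?PM = "PiM {..K} (\<lambda>_. M)"
  define r where "r \<psi> = c \<psi> / t \<psi>" for \<psi>
  define T where "T x = (\<Prod>k\<le>K. t (x k))" for x :: "nat \<Rightarrow> 'p"
  define A where "A x = Av c t K x" for x
  define h where "h x = (if A x = 0 then 0 else T x / A x)" for x
  have sp: "x k \<in> space M" if "x \<in> space ?PM" "k \<le> K" for x k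
    using that by (auto simp: space_PiM PiE_iff)
  have r0: "0 \<le> r \<psi>" if "\<psi> \<in> space M" for \<psi> using c0 t0 that by (simp add: r_def)
  have A0: "0 \<le> A x" if "x \<in> space ?PM" for x
    unfolding A_def using sp[OF that] c0 t0 by (intro Av_nonneg) auto
  have T0: "0 \<le> T x" if "x \<in> space ?PM" for x
    unfolding T_def using sp[OF that] t0 by (intro prod_nonneg) auto
  have h0: "0 \<le> h x" if "x \<in> space ?PM" for x
    unfolding h_def using A0[OF that] T0[OF that] by auto
  have rm[measurable]: "r \<in> borel_measurable M" unfolding r_def[abs_def] by measurable
  have Am[measurable]: "A \<in> borel_measurable ?PM"
    unfolding A_def[abs_def] Av_def by measurable
  have Tm[measurable]: "T \<in> borel_measurable ?PM"
    unfolding T_def[abs_def] by measurable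
  have hm[measurable]: "h \<in> borel_measurable ?PM"
    unfolding h_def[abs_def] by measurable
  have hr: "(\<lambda>x. ennreal (h x * r (x j))) \<in> borel_measurable ?PM" if "j \<le> K" for j
  proof -
    have [measurable]: "(\<lambda>x. r (x j)) \<in> borel_measurable ?PM"
      using measurable_compose[OF measurable_component_singleton[of j "{..K}" "\<lambda>_. M"] rm] that by simp
    show ?thesis by measurable
  qed
  have m1[measurable]: "(\<lambda>x. ennreal (if A x = 0 then T x else 0)) \<in> borel_measurable ?PM" by measurable
  have m2[measurable]: "(\<lambda>x. ennreal (if A x = 0 then 0 else T x)) \<in> borel_measurable ?PM" by measurable
  have sumA: "(\<Sum>j\<le>K. r (x j)) = real (K + 1) * A x" for x
    by (simp add: A_def Av_def r_def)
  have sumR: "(\<Sum>j\<le>K. h x * r (x j)) = (if A x = 0 then 0 else real (K + 1) * T x)" for x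
    by (simp add: sum_distrib_left[symmetric] sumA h_def)
  have omdec: "Om c t K x = (if A x = 0 then T x else 0) + h x * r (x 0)" if x: "x \<in> space ?PM" for x
  proof (cases "A x = 0")
    case True thus ?thesis by (simp add: Om_def A_def h_def T_def)
  next
    case False
    have "{..K} = insert 0 {1..K}" by auto
    hence "T x = t (x 0) * (\<Prod>k\<in>{1..K}. t (x k))" by (simp add: T_def)
    hence "T x * r (x 0) = (t (x 0) * r (x 0)) * (\<Prod>k\<in>{1..K}. t (x k))"
      by (simp add: ac_simps)
    also have "t (x 0) * r (x 0) = c (x 0)"
      using tr[OF sp[OF x, of 0]] by (simp only: r_def)
    finally have "T x * r (x 0) = c (x 0) * (\<Prod>k\<in>{1..K}. t (x k))" .
    thus ?thesis using False by (simp add: Om_def A_def h_def)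
  qed
  have perm: "(\<integral>\<^sup>+ x. ennreal (h x * r (x j)) \<partial>?PM) = (\<integral>\<^sup>+ x. ennreal (h x * r (x 0)) \<partial>?PM)"
    if j: "j \<le> K" for j
  proof -
    define s where "s = Transposition.transpose 0 j"
    have s: "s permutes {..K}" unfolding s_def using j by (intro permutes_swap_id) auto
    define S where "S x = (\<lambda>k\<in>{..K}. x (s k))" for x :: "nat \<Rightarrow> 'p"
    have Sm: "S \<in> ?PM \<rightarrow>\<^sub>M ?PM"
      unfolding S_def
      using permutes_in_image[OF s] by (intro measurable_restrict measurable_component_singleton) auto
    have "(\<integral>\<^sup>+ x. ennreal (h x * r (x 0)) \<partial>?PM) = (\<integral>\<^sup>+ x. ennreal (h x * r (x 0)) \<partial>distr ?PM ?PM S)"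
      using PiM_perm[OF sf _ s] by (simp add: S_def[abs_def])
    also have "\<dots> = (\<integral>\<^sup>+ x. ennreal (h (S x) * r (S x 0)) \<partial>?PM)"
      using Sm hr[of 0] by (intro nn_integral_distr) auto
    also have "\<dots> = (\<integral>\<^sup>+ x. ennreal (h x * r (x j)) \<partial>?PM)"
    proof (intro nn_integral_cong)
      fix x assume x: "x \<in> space ?PM"
      have S0: "S x 0 = x j" by (simp add: S_def s_def)
      have "A (S x) = A x"
      proof -
        have "(\<Sum>k\<le>K. c (S x k) / t (S x k)) = (\<Sum>k\<le>K. c (x (s k)) / t (x (s k)))"
          by (simp add: S_def)
        also have "\<dots> = (\<Sum>k\<le>K. c (x k) / t (x k))"
          using sum.permute[OF s, of "\<lambda>k. c (x k) / t (x k)"] by (simp add: comp_def)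
        finally show ?thesis by (simp add: A_def Av_def)
      qed
      moreover have "T (S x) = T x"
      proof -
        have "(\<Prod>k\<le>K. t (S x k)) = (\<Prod>k\<le>K. t (x (s k)))"
          by (simp add: S_def)
        also have "\<dots> = (\<Prod>k\<le>K. t (x k))"
          using prod.permute[OF s, of "\<lambda>k. t (x k)"] by (simp add: comp_def)
        finally show ?thesis by (simp add: T_def)
      qed
      ultimately show "ennreal (h (S x) * r (S x 0)) = ennreal (h x * r (x j))"
        by (simp add: h_def S0)
    qed
    finally show ?thesis by simp
  qed
  have "of_nat (Suc K) * (\<integral>\<^sup>+ x. ennreal (h x * r (x 0)) \<partial>?PM)
      = (\<Sum>j\<le>K. (\<integral>\<^sup>+ x. ennreal (h x * r (x j)) \<partial>?PM))"
  proof -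
    have "(\<Sum>j\<le>K. (\<integral>\<^sup>+ x. ennreal (h x * r (x j)) \<partial>?PM)) = (\<Sum>j\<le>K. (\<integral>\<^sup>+ x. ennreal (h x * r (x 0)) \<partial>?PM))"
      by (rule sum.cong[OF refl], rule perm) simp
    thus ?thesis by simp
  qed
  also have "\<dots> = (\<integral>\<^sup>+ x. (\<Sum>j\<le>K. ennreal (h x * r (x j))) \<partial>?PM)"
    using hr by (intro nn_integral_sum[symmetric]) auto
  also have "\<dots> = (\<integral>\<^sup>+ x. ennreal (real (K + 1)) * ennreal (if A x = 0 then 0 else T x) \<partial>?PM)"
  proof (intro nn_integral_cong)
    fix x assume x: "x \<in> space ?PM"
    have "(\<Sum>j\<le>K. ennreal (h x * r (x j))) = ennreal (\<Sum>j\<le>K. h x * r (x j))"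
      using h0[OF x] r0 sp[OF x] by (intro sum_ennreal) auto
    also have "\<dots> = ennreal (real (K + 1) * (if A x = 0 then 0 else T x))"
      by (simp add: sumR)
    also have "\<dots> = ennreal (real (K + 1)) * ennreal (if A x = 0 then 0 else T x)"
      using T0[OF x] by (intro ennreal_mult) auto
    finally show "(\<Sum>j\<le>K. ennreal (h x * r (x j))) = ennreal (real (K + 1)) * ennreal (if A x = 0 then 0 else T x)" .
  qed
  also have "\<dots> = of_nat (Suc K) * (\<integral>\<^sup>+ x. ennreal (if A x = 0 then 0 else T x) \<partial>?PM)"
    by (subst nn_integral_cmult) (auto simp: ennreal_of_nat_eq_real_of_nat)
  finally have eqK: "of_nat (Suc K) * (\<integral>\<^sup>+ x. ennreal (h x * r (x 0)) \<partial>?PM) = of_nat (Suc K) * (\<integral>\<^sup>+ x. ennreal (if A x = 0 then 0 else T x) \<partial>?PM)" .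
  have nz: "of_nat (Suc K) \<noteq> (0::ennreal)" by (simp only: of_nat_eq_0_iff)
  have eqh: "(\<integral>\<^sup>+ x. ennreal (h x * r (x 0)) \<partial>?PM) = (\<integral>\<^sup>+ x. ennreal (if A x = 0 then 0 else T x) \<partial>?PM)"
    using eqK unfolding ennreal_mult_cancel_left using nz ennreal_of_nat_neq_top by blast
  have "(\<integral>\<^sup>+ x. ennreal (Om c t K x) \<partial>?PM)
      = (\<integral>\<^sup>+ x. ennreal (if A x = 0 then T x else 0) + ennreal (h x * r (x 0)) \<partial>?PM)"
  proof (intro nn_integral_cong)
    fix x assume x: "x \<in> space ?PM"
    show "ennreal (Om c t K x) = ennreal (if A x = 0 then T x else 0) + ennreal (h x * r (x 0))"
    proof -
      have "ennreal (Om c t K x) = ennreal ((if A x = 0 then T x else 0) + h x * r (x 0))"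
        by (simp only: omdec[OF x])
      also have "\<dots> = ennreal (if A x = 0 then T x else 0) + ennreal (h x * r (x 0))"
        using T0[OF x] h0[OF x] r0[OF sp[OF x, of 0]] by (intro ennreal_plus) auto
      finally show ?thesis .
    qed
  qed
  also have "\<dots> = (\<integral>\<^sup>+ x. ennreal (if A x = 0 then T x else 0) \<partial>?PM) + (\<integral>\<^sup>+ x. ennreal (h x * r (x 0)) \<partial>?PM)"
    using hr[of 0] by (intro nn_integral_add) auto
  also have "\<dots> = (\<integral>\<^sup>+ x. ennreal (if A x = 0 then T x else 0) + ennreal (if A x = 0 then 0 else T x) \<partial>?PM)"
    unfolding eqh by (intro nn_integral_add[symmetric]) auto
  also have "\<dots> = (\<integral>\<^sup>+ x. (\<Prod>k\<in>{..K}. ennreal (t (x k))) \<partial>?PM)"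
  proof (intro nn_integral_cong)
    fix x assume x: "x \<in> space ?PM"
    have "(\<Prod>k\<in>{..K}. ennreal (t (x k))) = ennreal (T x)"
      unfolding T_def using t0 sp[OF x] by (intro prod_ennreal) auto
    thus "ennreal (if A x = 0 then T x else 0) + ennreal (if A x = 0 then 0 else T x) = (\<Prod>k\<in>{..K}. ennreal (t (x k)))"
      by simp
  qed
  also have "\<dots> = (\<Prod>k\<in>{..K}. (\<integral>\<^sup>+ \<psi>. ennreal (t \<psi>) \<partial>M))"
    by (intro P.product_nn_integral_prod) auto
  also have "\<dots> = 1" using tn by simp
  finally show ?thesis .
qed

theorem lemma2:
  fixes N :: "'z measure" and M :: "'p measure"
    and q :: "'z \<Rightarrow> 'p \<Rightarrow> real" and \<tau> :: "'z \<Rightarrow> 'p \<Rightarrow> real"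
    and z :: 'z and K :: nat
  assumes "sigma_finite_measure N" and "sigma_finite_measure M"
    and q_meas: "(\<lambda>(z', \<psi>). q z' \<psi>) \<in> borel_measurable (N \<Otimes>\<^sub>M M)"
    and q_nonneg: "\<And>z' \<psi>. z' \<in> space N \<Longrightarrow> \<psi> \<in> space M \<Longrightarrow> 0 \<le> q z' \<psi>"
    and q_norm: "(\<integral>\<^sup>+ x. ennreal (case x of (z', \<psi>) \<Rightarrow> q z' \<psi>) \<partial>(N \<Otimes>\<^sub>M M)) = 1"
    and z_in: "z \<in> space N"
    and qz_pos: "0 < marg M q z" and qz_fin: "marg M q z < \<infinity>"
    and tau_meas: "\<tau> z \<in> borel_measurable M"
    and tau_nonneg: "\<And>\<psi>. \<psi> \<in> space M \<Longrightarrow> 0 \<le> \<tau> z \<psi>"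
    and tau_norm: "(\<integral>\<^sup>+ \<psi>. ennreal (\<tau> z \<psi>) \<partial>M) = 1"
    and supp: "\<And>\<psi>. \<psi> \<in> space M \<Longrightarrow> \<tau> z \<psi> = 0 \<Longrightarrow> q z \<psi> = 0"
  shows "nu M q \<tau> z K \<in> borel_measurable (PiM {..Suc K} (\<lambda>_. M))
    \<and> (\<forall>\<psi>s \<in> space (PiM {..Suc K} (\<lambda>_. M)). 0 \<le> nu M q \<tau> z K \<psi>s)
    \<and> (\<integral>\<^sup>+ \<psi>s. ennreal (nu M q \<tau> z K \<psi>s) \<partial>(PiM {..Suc K} (\<lambda>_. M))) = 1"
proof -
  note sf = assms(2)
  interpret P: product_sigma_finite "\<lambda>_. M" using sf by (simp add: product_sigma_finite_def)
  define c where "c = cond M q z"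
  define t where "t = \<tau> z"
  define m where "m = enn2real (marg M q z)"
  have mm: "marg M q z = ennreal m" using qz_fin by (simp add: m_def)
  have mpos: "0 < m" using qz_pos qz_fin by (simp add: m_def enn2real_positive_iff)
  have c_eq: "c \<psi> = q z \<psi> / m" for \<psi> by (simp add: c_def cond_def m_def)
  have qm[measurable]: "(\<lambda>\<psi>. q z \<psi>) \<in> borel_measurable M"
    using measurable_Pair2[OF q_meas z_in] by simp
  have cm[measurable]: "c \<in> borel_measurable M"
    unfolding c_eq[abs_def] by measurable
  have tm[measurable]: "t \<in> borel_measurable M" using tau_meas by (simp add: t_def)
  have c0: "0 \<le> c \<psi>" if "\<psi> \<in> space M" for \<psi>
    using q_nonneg[OF z_in that] mpos by (simp add: c_eq)
  have t0: "0 \<le> t \<psi>" if "\<psi> \<in> space M" for \<psi> using tau_nonneg[OF that] by (simp add: t_def)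
  have tn: "(\<integral>\<^sup>+ \<psi>. ennreal (t \<psi>) \<partial>M) = 1" using tau_norm by (simp add: t_def)
  have tr: "t \<psi> * (c \<psi> / t \<psi>) = c \<psi>" if "\<psi> \<in> space M" for \<psi>
  proof (cases "t \<psi> = 0")
    case True thus ?thesis using supp[OF that] by (simp add: c_eq t_def)
  qed simp
  have cn: "(\<integral>\<^sup>+ \<psi>. ennreal (c \<psi>) \<partial>M) = 1"
  proof -
    have "(\<integral>\<^sup>+ \<psi>. ennreal (c \<psi>) \<partial>M) = (\<integral>\<^sup>+ \<psi>. ennreal (q z \<psi>) * ennreal (1 / m) \<partial>M)"
      using mpos by (intro nn_integral_cong) (simp add: c_eq ennreal_mult''[symmetric])
    also have "\<dots> = marg M q z * ennreal (1 / m)"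
      by (simp add: nn_integral_multc marg_def)
    also have "\<dots> = ennreal (m * (1 / m))" unfolding mm by (rule ennreal_mult''[symmetric]) (use mpos in simp)
    also have "\<dots> = 1" using mpos by simp
    finally show ?thesis .
  qed
  have nu_eq: "nu M q \<tau> z K x = Om c t K x * t (x (Suc K)) * Av c t (Suc K) x" for x
    by (simp add: nu_def omega_Om avg_ratio_Av c_def t_def)
  have nu_eq': "nu M q \<tau> z K = (\<lambda>x. Om c t K x * t (x (Suc K)) * Av c t (Suc K) x)"
    using nu_eq by (intro ext) simp
  have meas: "nu M q \<tau> z K \<in> borel_measurable (PiM {..Suc K} (\<lambda>_. M))"
    unfolding nu_eq' Om_def Av_def by measurable
  have nonneg: "\<forall>\<psi>s \<in> space (PiM {..Suc K} (\<lambda>_. M)). 0 \<le> nu M q \<tau> z K \<psi>s"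
  proof
    fix x assume x: "x \<in> space (PiM {..Suc K} (\<lambda>_. M))"
    have sp: "x k \<in> space M" if "k \<le> Suc K" for k using x that by (auto simp: space_PiM PiE_iff)
    show "0 \<le> nu M q \<tau> z K x" unfolding nu_eq
      using sp c0 t0
      by (intro mult_nonneg_nonneg Om_nonneg Av_nonneg) auto
  qed
  define G where "G x = c (x 0) * (\<Prod>k\<in>{1..K}. t (x k))" for x :: "nat \<Rightarrow> 'p"
  have Gn: "(\<integral>\<^sup>+ x. ennreal (G x) \<partial>PiM {..K} (\<lambda>_. M)) = 1"
  proof -
    define f where "f k = (if k = 0 then c else t)" for k :: nat
    have "(\<integral>\<^sup>+ x. ennreal (G x) \<partial>PiM {..K} (\<lambda>_. M)) = (\<integral>\<^sup>+ x. (\<Prod>k\<in>{..K}. ennreal (f k (x k))) \<partial>PiM {..K} (\<lambda>_. M))"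
    proof (intro nn_integral_cong)
      fix x assume x: "x \<in> space (PiM {..K} (\<lambda>_. M))"
      have sp: "x k \<in> space M" if "k \<le> K" for k using x that by (auto simp: space_PiM PiE_iff)
      have "{..K} = insert 0 {1..K}" by auto
      hence "(\<Prod>k\<in>{..K}. f k (x k)) = f 0 (x 0) * (\<Prod>k\<in>{1..K}. f k (x k))" by simp
      also have "\<dots> = G x" by (simp add: f_def G_def)
      finally have "G x = (\<Prod>k\<in>{..K}. f k (x k))" by simp
      moreover have "(\<Prod>k\<in>{..K}. ennreal (f k (x k))) = ennreal (\<Prod>k\<in>{..K}. f k (x k))"
        using sp c0 t0 by (intro prod_ennreal) (auto simp: f_def)
      ultimately show "ennreal (G x) = (\<Prod>k\<in>{..K}. ennreal (f k (x k)))" by simp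
    qed
    also have "\<dots> = (\<Prod>k\<in>{..K}. (\<integral>\<^sup>+ \<psi>. ennreal (f k \<psi>) \<partial>M))"
      by (intro P.product_nn_integral_prod) (auto simp: f_def)
    also have "\<dots> = (\<Prod>k\<in>{..K}. (1::ennreal))"
      using cn tn by (intro prod.cong refl) (simp add: f_def)
    also have "\<dots> = 1" by simp
    finally show ?thesis .
  qed
  have On: "(\<integral>\<^sup>+ x. ennreal (Om c t K x) \<partial>PiM {..K} (\<lambda>_. M)) = 1"
    using Om_norm[OF sf cm tm c0 t0 tn tr] .
  have ins: "{..Suc K} = insert (Suc K) {..K}" by auto
  have fm: "(\<lambda>x. ennreal (nu M q \<tau> z K x)) \<in> borel_measurable (PiM (insert (Suc K) {..K}) (\<lambda>_. M))"
    using meas unfolding ins by measurable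
  have "(\<integral>\<^sup>+ \<psi>s. ennreal (nu M q \<tau> z K \<psi>s) \<partial>(PiM {..Suc K} (\<lambda>_. M)))
     = (\<integral>\<^sup>+ x. (\<integral>\<^sup>+ y. ennreal (nu M q \<tau> z K (x(Suc K := y))) \<partial>M) \<partial>PiM {..K} (\<lambda>_. M))"
    unfolding ins by (rule P.product_nn_integral_insert[OF _ _ fm]) auto
  also have "\<dots> = (\<integral>\<^sup>+ x. ennreal (real (K + 1) / real (K + 2)) * ennreal (G x)
       + ennreal (1 / real (K + 2)) * ennreal (Om c t K x) \<partial>PiM {..K} (\<lambda>_. M))"
  proof (intro nn_integral_cong)
    fix x assume x: "x \<in> space (PiM {..K} (\<lambda>_. M))"
    have sp: "x k \<in> space M" if "k \<le> K" for k using x that by (auto simp: space_PiM PiE_iff)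
    define Ox where "Ox = Om c t K x"
    define a where "a = Av c t K x"
    have O0: "0 \<le> Ox" unfolding Ox_def using sp c0 t0 by (intro Om_nonneg) auto
    have a0: "0 \<le> a" unfolding a_def using sp c0 t0 by (intro Av_nonneg) auto
    have OA: "Ox * a = G x" unfolding Ox_def a_def G_def
      using sp c0 t0 tr by (intro Om_Av) auto
    have inner: "ennreal (nu M q \<tau> z K (x(Suc K := y))) =
        ennreal (Ox * real (K + 1) * a / real (K + 2)) * ennreal (t y) + ennreal (Ox / real (K + 2)) * ennreal (c y)"
      if y: "y \<in> space M" for y
    proof -
      have o: "Om c t K (x(Suc K := y)) = Ox" unfolding Ox_def by (intro Om_cong) auto
      have s1: "(\<Sum>k\<le>K. c ((x(Suc K := y)) k) / t ((x(Suc K := y)) k)) = real (K + 1) * a"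
        by (simp add: a_def Av_def)
      have "Av c t (Suc K) (x(Suc K := y)) = (real (K + 1) * a + c y / t y) / real (K + 2)"
        unfolding Av_def using s1 by (simp add: field_simps)
      hence "nu M q \<tau> z K (x(Suc K := y)) = Ox * t y * ((real (K + 1) * a + c y / t y) / real (K + 2))"
        by (simp add: nu_eq o)
      also have "\<dots> = (Ox * real (K + 1) * a / real (K + 2)) * t y + (Ox / real (K + 2)) * (t y * (c y / t y))"
      proof -
        have "\<And>u D::real. Ox * t y * ((real (K + 1) * a + u) / D) = (Ox * real (K + 1) * a / D) * t y + (Ox / D) * (t y * u)"
          by (simp add: add_divide_distrib algebra_simps)
        thus ?thesis by blast
      qed
      also have "\<dots> = (Ox * real (K + 1) * a / real (K + 2)) * t y + (Ox / real (K + 2)) * c y"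
        using tr[OF y] by simp
      finally have e: "nu M q \<tau> z K (x(Suc K := y)) = (Ox * real (K + 1) * a / real (K + 2)) * t y + (Ox / real (K + 2)) * c y" .
      have gen: "\<And>p w u v::real. 0 \<le> p \<Longrightarrow> 0 \<le> w \<Longrightarrow> 0 \<le> u \<Longrightarrow> 0 \<le> v \<Longrightarrow>
          ennreal (p * u + w * v) = ennreal p * ennreal u + ennreal w * ennreal v"
        by (simp add: ennreal_plus ennreal_mult)
      show ?thesis unfolding e
        by (rule gen) (use O0 a0 t0[OF y] c0[OF y] in auto)
    qed
    have "(\<integral>\<^sup>+ y. ennreal (nu M q \<tau> z K (x(Suc K := y))) \<partial>M)
        = (\<integral>\<^sup>+ y. ennreal (Ox * real (K + 1) * a / real (K + 2)) * ennreal (t y) + ennreal (Ox / real (K + 2)) * ennreal (c y) \<partial>M)"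
      using inner by (intro nn_integral_cong) auto
    also have "\<dots> = ennreal (Ox * real (K + 1) * a / real (K + 2)) * (\<integral>\<^sup>+ y. ennreal (t y) \<partial>M)
        + ennreal (Ox / real (K + 2)) * (\<integral>\<^sup>+ y. ennreal (c y) \<partial>M)"
      by (simp add: nn_integral_add nn_integral_cmult)
    also have "\<dots> = ennreal (real (K + 1) / real (K + 2) * G x) + ennreal (1 / real (K + 2) * Ox)"
    proof -
      have e1: "Ox * real (K + 1) * a / real (K + 2) = real (K + 1) / real (K + 2) * G x"
        unfolding OA[symmetric] by simp
      have e2: "Ox / real (K + 2) = 1 / real (K + 2) * Ox" by simp
      show ?thesis by (simp only: tn cn e1 e2 mult_1_right)
    qed
    also have "\<dots> = ennreal (real (K + 1) / real (K + 2)) * ennreal (G x) + ennreal (1 / real (K + 2)) * ennreal Ox"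
    proof -
      have G0: "0 \<le> G x" unfolding OA[symmetric] using O0 a0 by simp
      have f1: "ennreal (real (K + 1) / real (K + 2) * G x) = ennreal (real (K + 1) / real (K + 2)) * ennreal (G x)"
        using G0 by (intro ennreal_mult) auto
      have f2: "ennreal (1 / real (K + 2) * Ox) = ennreal (1 / real (K + 2)) * ennreal Ox"
        using O0 by (intro ennreal_mult) auto
      show ?thesis by (simp only: f1 f2)
    qed
    finally show "(\<integral>\<^sup>+ y. ennreal (nu M q \<tau> z K (x(Suc K := y))) \<partial>M) =
        ennreal (real (K + 1) / real (K + 2)) * ennreal (G x) + ennreal (1 / real (K + 2)) * ennreal (Om c t K x)"
      by (simp add: Ox_def)
  qed
  also have "\<dots> = ennreal (real (K + 1) / real (K + 2)) * (\<integral>\<^sup>+ x. ennreal (G x) \<partial>PiM {..K} (\<lambda>_. M))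
       + ennreal (1 / real (K + 2)) * (\<integral>\<^sup>+ x. ennreal (Om c t K x) \<partial>PiM {..K} (\<lambda>_. M))"
  proof -
    have [measurable]: "G \<in> borel_measurable (PiM {..K} (\<lambda>_. M))" unfolding G_def[abs_def] by measurable
    have [measurable]: "Om c t K \<in> borel_measurable (PiM {..K} (\<lambda>_. M))" unfolding Om_def[abs_def] Av_def by measurable
    show ?thesis by (simp add: nn_integral_add nn_integral_cmult)
  qed
  also have "\<dots> = ennreal (real (K + 1) / real (K + 2) + 1 / real (K + 2))"
    using Gn On by (simp add: ennreal_plus)
  also have "\<dots> = 1" by (simp add: field_simps)
  finally show ?thesis using meas nonneg by blast
qed

end
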